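(* Let $(Y,u)$ and $(Y',u')$ be non-empty ultrametric spaces, let $f:Y\to Y'$ be a map and let $z'\in Y'$ be an attractor for $f$. If $(Y,u)$ is spherically complete, then $z'\in f(Y)$.
   Context: An ultrametric space $(Y,u)$ is a set $Y$ with a map $u$ from $Y\times Y$ onto a totally ordered set $\Gamma$ with last element $\infty$ such that for all $x,y,z\in Y$: $u(y,z)=\infty$ iff $y=z$; $u(y,z)\ge\min\{u(y,x),u(x,z)\}$; $u(y,z)=u(z,y)$. (Larger $u$ means closer.) For $y\in Y$ and $\alpha\in\Gamma$, the closed ball is $B_\alpha(y)=\{z\in Y: u(y,z)\ge\alpha\}$, and $B(x,y):=B_{u(x,y)}(x)$. A ball is a union of a non-empty collection of closed balls which contain a common element. A nest of balls is a set of balls totally ordered by inclusion. $(Y,u)$ is spherically complete if every nest of balls has non-empty intersection. We write $fy$ for $f(y)$. An element $z'\in Y'$ is an attractor for $f:Y\to Y'$ if for every $y\in Y$ with $z'\neq fy$ there is $z\in Y$ such that (AT1) $u'(fz,z')>u'(fy,z')$ and (AT2) $f(B(y,z))\subseteq B(fy,z')$. *)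

theory Defs
  imports Main
begin

text \<open>An ultrametric space on carrier Y with distance u onto the value set G
  (a subset of a linearly ordered type), whose last element is infty.
  Larger values mean closer.\<close>
definition ultrametric_space :: "'a set \<Rightarrow> ('a \<Rightarrow> 'a \<Rightarrow> 'g::linorder) \<Rightarrow> 'g set \<Rightarrow> 'g \<Rightarrow> bool" where
  "ultrametric_space Y u G infty \<longleftrightarrow>
     (\<lambda>(x, y). u x y) ` (Y \<times> Y) = G \<and>
     infty \<in> G \<and> (\<forall>g\<in>G. g \<le> infty) \<and>
     (\<forall>y\<in>Y. \<forall>z\<in>Y. u y z = infty \<longleftrightarrow> y = z) \<and>
     (\<forall>x\<in>Y. \<forall>y\<in>Y. \<forall>z\<in>Y. u y z \<ge> min (u y x) (u x z)) \<and>
     (\<forall>y\<in>Y. \<forall>z\<in>Y. u y z = u z y)"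

definition closed_ball :: "'a set \<Rightarrow> ('a \<Rightarrow> 'a \<Rightarrow> 'g::linorder) \<Rightarrow> 'g \<Rightarrow> 'a \<Rightarrow> 'a set" where
  "closed_ball Y u \<alpha> y = {z \<in> Y. u y z \<ge> \<alpha>}"

definition ball2 :: "'a set \<Rightarrow> ('a \<Rightarrow> 'a \<Rightarrow> 'g::linorder) \<Rightarrow> 'a \<Rightarrow> 'a \<Rightarrow> 'a set" where
  "ball2 Y u x y = closed_ball Y u (u x y) x"

definition is_ball :: "'a set \<Rightarrow> ('a \<Rightarrow> 'a \<Rightarrow> 'g::linorder) \<Rightarrow> 'g set \<Rightarrow> 'a set \<Rightarrow> bool" where
  "is_ball Y u G B \<longleftrightarrow>
     (\<exists>C. C \<noteq> {} \<and> (\<forall>c\<in>C. \<exists>y\<in>Y. \<exists>\<alpha>\<in>G. c = closed_ball Y u \<alpha> y) \<and>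
          (\<exists>x. \<forall>c\<in>C. x \<in> c) \<and> B = \<Union>C)"

definition is_nest :: "'a set \<Rightarrow> ('a \<Rightarrow> 'a \<Rightarrow> 'g::linorder) \<Rightarrow> 'g set \<Rightarrow> 'a set set \<Rightarrow> bool" where
  "is_nest Y u G N \<longleftrightarrow> (\<forall>B\<in>N. is_ball Y u G B) \<and>
     (\<forall>B1\<in>N. \<forall>B2\<in>N. B1 \<subseteq> B2 \<or> B2 \<subseteq> B1)"

definition spherically_complete :: "'a set \<Rightarrow> ('a \<Rightarrow> 'a \<Rightarrow> 'g::linorder) \<Rightarrow> 'g set \<Rightarrow> bool" where
  "spherically_complete Y u G \<longleftrightarrow> (\<forall>N. is_nest Y u G N \<longrightarrow> Y \<inter> \<Inter>N \<noteq> {})"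

definition attractor ::
  "'a set \<Rightarrow> ('a \<Rightarrow> 'a \<Rightarrow> 'g::linorder) \<Rightarrow> 'b set \<Rightarrow> ('b \<Rightarrow> 'b \<Rightarrow> 'h::linorder)
    \<Rightarrow> ('a \<Rightarrow> 'b) \<Rightarrow> 'b \<Rightarrow> bool" where
  "attractor Y u Y' u' f z' \<longleftrightarrow>
     (\<forall>y\<in>Y. z' \<noteq> f y \<longrightarrow>
        (\<exists>z\<in>Y. u' (f z) z' > u' (f y) z' \<and>
               f ` ball2 Y u y z \<subseteq> ball2 Y' u' (f y) z'))"

end

theory Submission
  imports Defs
begin

theorem theorem1:
  fixes Y :: "'a set" and u :: "'a \<Rightarrow> 'a \<Rightarrow> 'g::linorder" and G :: "'g set" and infty :: 'g
    and Y' :: "'b set" and u' :: "'b \<Rightarrow> 'b \<Rightarrow> 'h::linorder" and G' :: "'h set" and infty' :: 'h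
    and f :: "'a \<Rightarrow> 'b" and z' :: 'b
  assumes "ultrametric_space Y u G infty" and "Y \<noteq> {}"
    and "ultrametric_space Y' u' G' infty'" and "Y' \<noteq> {}"
    and "f ` Y \<subseteq> Y'" and "z' \<in> Y'"
    and "attractor Y u Y' u' f z'"
    and "spherically_complete Y u G"
  shows "z' \<in> f ` Y"
proof (rule ccontr)
  assume nz: "z' \<notin> f ` Y"
  note U = assms(1)[unfolded ultrametric_space_def]
  note U' = assms(3)[unfolded ultrametric_space_def]
  have tri: "\<And>x y z. x \<in> Y \<Longrightarrow> y \<in> Y \<Longrightarrow> z \<in> Y \<Longrightarrow> u y z \<ge> min (u y x) (u x z)"
    using U by blast
  have sym: "\<And>y z. y \<in> Y \<Longrightarrow> z \<in> Y \<Longrightarrow> u y z = u z y" using U by blast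
  have tri': "\<And>x y z. x \<in> Y' \<Longrightarrow> y \<in> Y' \<Longrightarrow> z \<in> Y' \<Longrightarrow> u' y z \<ge> min (u' y x) (u' x z)"
    using U' by blast
  have sym': "\<And>y z. y \<in> Y' \<Longrightarrow> z \<in> Y' \<Longrightarrow> u' y z = u' z y" using U' by blast
  have "\<forall>y\<in>Y. \<exists>z\<in>Y. u' (f z) z' > u' (f y) z' \<and> f ` ball2 Y u y z \<subseteq> ball2 Y' u' (f y) z'"
    using assms(7) nz unfolding attractor_def by blast
  then obtain g where gY: "\<And>y. y \<in> Y \<Longrightarrow> g y \<in> Y"
    and g1: "\<And>y. y \<in> Y \<Longrightarrow> u' (f (g y)) z' > u' (f y) z'"
    and g2: "\<And>y. y \<in> Y \<Longrightarrow> f ` ball2 Y u y (g y) \<subseteq> ball2 Y' u' (f y) z'"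
    by metis
  define B where "B y = ball2 Y u y (g y)" for y
  define a where "a y = u' (f y) z'" for y
  have fY: "\<And>y. y \<in> Y \<Longrightarrow> f y \<in> Y'" using assms(5) by blast
  have BY: "B y \<subseteq> Y" for y unfolding B_def ball2_def closed_ball_def by auto
  have memB: "x \<in> B y \<longleftrightarrow> x \<in> Y \<and> u y x \<ge> u y (g y)" for x y
    unfolding B_def ball2_def closed_ball_def by auto
  have uinf: "\<And>y. y \<in> Y \<Longrightarrow> u y y = infty" using U by blast
  have Ginf: "\<And>y z. y \<in> Y \<Longrightarrow> z \<in> Y \<Longrightarrow> u y z \<le> infty" using U by blast
  have selfB: "y \<in> B y" if "y \<in> Y" for y
    using that memB uinf Ginf gY by simp
  have gB: "g y \<in> B y" if "y \<in> Y" for y using that memB gY by simp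
  have fB: "u' (f y) (f x) \<ge> a y" if "y \<in> Y" "x \<in> B y" for x y
    using g2[OF that(1)] that(2) unfolding B_def ball2_def closed_ball_def a_def by blast
  have amono: "a x \<ge> a y" if "y \<in> Y" "x \<in> B y" for x y
  proof -
    have x: "x \<in> Y" using that BY by blast
    have "a x \<ge> min (u' (f x) (f y)) (u' (f y) z')"
      unfolding a_def using tri'[OF fY[OF that(1)] fY[OF x] assms(6)] .
    moreover have "u' (f x) (f y) \<ge> a y" using fB[OF that] sym' fY x that(1) by metis
    ultimately show ?thesis unfolding a_def by simp
  qed
  have Bsub: "B x \<subseteq> B y" if "y \<in> Y" "x \<in> B y" "a x > a y" for x y
  proof (cases "u x (g x) \<ge> u y (g y)")
    case True
    have x: "x \<in> Y" using that BY by blast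
    show ?thesis
    proof
      fix w assume w: "w \<in> B x"
      hence wY: "w \<in> Y" using BY by blast
      have "u y w \<ge> min (u y x) (u x w)" using tri[OF x that(1) wY] .
      moreover have "u y x \<ge> u y (g y)" using that(2) memB by blast
      moreover have "u x w \<ge> u y (g y)" using w memB True by (meson order_trans)
      ultimately show "w \<in> B y" using memB wY by (simp add: min_def split: if_splits)
    qed
  next
    case False
    have x: "x \<in> Y" using that BY by blast
    have "u y x \<ge> u y (g y)" using that(2) memB by blast
    hence "u x y \<ge> u x (g x)" using False sym[OF x that(1)] by simp
    hence "y \<in> B x" using memB that(1) by blast
    hence "u' (f x) (f y) \<ge> a x" using fB x by blast
    moreover have "a y \<ge> min (u' (f y) (f x)) (u' (f x) z')"
      unfolding a_def using tri'[OF fY[OF x] fY[OF that(1)] assms(6)] .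
    moreover have "u' (f y) (f x) = u' (f x) (f y)" using sym' fY x that(1) by metis
    ultimately have "a y \<ge> a x" unfolding a_def by (simp add: min_def split: if_splits)
    thus ?thesis using that(3) by simp
  qed
  define r where "r = {(y, x). y \<in> Y \<and> x \<in> Y \<and> (x = y \<or> (x \<in> B y \<and> a y < a x))}"
  have Fr: "Field r = Y"
  proof
    show "Field r \<subseteq> Y" unfolding r_def by (auto simp: Field_iff)
    show "Y \<subseteq> Field r" unfolding r_def by (auto intro: FieldI1)
  qed
  have po: "Partial_order r"
  proof -
    have "refl_on Y r" unfolding refl_on_def r_def by auto
    hence "refl_on (Field r) r" using Fr by simp
    moreover have "trans r"
    proof (rule transI)
      fix x y z assume "(x, y) \<in> r" "(y, z) \<in> r"
      thus "(x, z) \<in> r" unfolding r_def using Bsub by auto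
    qed
    moreover have "antisym r" unfolding antisym_def r_def by auto
    moreover have "r \<subseteq> Field r \<times> Field r" by (auto intro: FieldI1 FieldI2)
    ultimately show ?thesis unfolding partial_order_on_def preorder_on_def by blast
  qed
  have ub: "\<exists>v\<in>Field r. \<forall>c\<in>C. (c, v) \<in> r" if C: "C \<in> Chains r" for C
  proof (cases "C = {}")
    case True thus ?thesis using assms(2) Fr by auto
  next
    case False
    have CY: "C \<subseteq> Y" using C unfolding Chains_def r_def by auto
    show ?thesis
    proof (cases "\<exists>m\<in>C. \<forall>c\<in>C. (c, m) \<in> r")
      case True thus ?thesis using CY Fr by blast
    next
      case nomax: False
      let ?N = "B ` C"
      have ball: "is_ball Y u G (B y)" if "y \<in> Y" for y
        unfolding is_ball_def
      proof (intro exI[of _ "{B y}"] conjI)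
        show "\<forall>c\<in>{B y}. \<exists>y'\<in>Y. \<exists>\<alpha>\<in>G. c = closed_ball Y u \<alpha> y'"
          using that gY U unfolding B_def ball2_def by blast
        show "\<exists>x. \<forall>c\<in>{B y}. x \<in> c" using selfB[OF that] by blast
      qed auto
      have "is_nest Y u G ?N"
        unfolding is_nest_def
      proof (intro conjI ballI)
        fix b assume "b \<in> ?N" thus "is_ball Y u G b" using ball CY by blast
      next
        fix b1 b2 assume "b1 \<in> ?N" "b2 \<in> ?N"
        then obtain c1 c2 where c: "c1 \<in> C" "c2 \<in> C" "b1 = B c1" "b2 = B c2" by blast
        hence "(c1, c2) \<in> r \<or> (c2, c1) \<in> r" using C unfolding Chains_def by blast
        thus "b1 \<subseteq> b2 \<or> b2 \<subseteq> b1" using c Bsub unfolding r_def by auto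
      qed
      then obtain x where x: "x \<in> Y" "\<forall>c\<in>C. x \<in> B c"
        using assms(8) unfolding spherically_complete_def by blast
      have "(c, x) \<in> r" if c: "c \<in> C" for c
      proof -
        obtain c' where c': "c' \<in> C" "(c', c) \<notin> r" using nomax c by blast
        have "(c, c') \<in> r" using C c c' unfolding Chains_def by blast
        hence "c' \<noteq> c" "c' \<in> B c" "a c < a c'" using c' unfolding r_def by auto
        moreover have "a x \<ge> a c'" using amono x c' CY by blast
        ultimately show ?thesis using x c CY unfolding r_def by auto
      qed
      thus ?thesis using x Fr by blast
    qed
  qed
  obtain m where m: "m \<in> Y" "\<forall>x\<in>Y. (m, x) \<in> r \<longrightarrow> x = m"
    using Zorns_po_lemma[OF po ub] Fr by auto
  have "(m, g m) \<in> r" using m gB gY g1 unfolding r_def a_def by auto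
  hence "g m = m" using m gY by blast
  thus False using g1[OF m(1)] by simp
qed

end
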